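(* Let $G$ be a closed graph on a compact metrizable space $X$. If $\mathfrak{b}<\kappa(G)$, then the poset $P_G$ adds no dominating reals (i.e. no condition of $P_G$ forces some element of $\omega^\omega$ to dominate modulo finite all ground model elements of $\omega^\omega$).
   Context: A graph $G$ on $X$ is a symmetric irreflexive relation; it is closed if it is closed in $(X\times X)\setminus$ diagonal. A $G$-anticlique is a set with no two distinct $G$-connected points. $\kappa(G)$ is the minimum cardinality of a subset of $X$ not covered by countably many compact $G$-anticliques ($\infty$ if $X$ is so covered). $\mathfrak{b}$ is the minimum cardinality of a subset of $\omega^\omega$ unbounded in the modulo-finite domination order. The poset $P_G$ consists of all pairs $p=\langle a_p,o_p\rangle$ where $a_p\subset X$ is a finite $G$-anticlique and $o_p\subset X$ is open with $a_p\subset o_p$; $q\leq p$ iff $a_p\subset a_q$ and $o_q\subset o_p$. *)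

theory Defs
  imports "HOL-Analysis.Analysis"
begin

definition anticlique :: "('a \<Rightarrow> 'a \<Rightarrow> bool) \<Rightarrow> 'a set \<Rightarrow> bool" where
  "anticlique G A \<longleftrightarrow> (\<forall>x\<in>A. \<forall>y\<in>A. x \<noteq> y \<longrightarrow> \<not> G x y)"

definition closed_graph :: "('a::topological_space \<Rightarrow> 'a \<Rightarrow> bool) \<Rightarrow> bool" where
  "closed_graph G \<longleftrightarrow> (\<forall>x y. G x y \<longrightarrow> G y x) \<and> (\<forall>x. \<not> G x x) \<and>
     closedin (top_of_set {p::'a \<times> 'a. fst p \<noteq> snd p}) {(x, y). G x y}"

definition cc_covered :: "('a::topological_space \<Rightarrow> 'a \<Rightarrow> bool) \<Rightarrow> 'a set \<Rightarrow> bool" where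
  "cc_covered G Y \<longleftrightarrow>
     (\<exists>C. countable C \<and> (\<forall>K\<in>C. compact K \<and> anticlique G K) \<and> Y \<subseteq> \<Union>C)"

definition unbounded_family :: "(nat \<Rightarrow> nat) set \<Rightarrow> bool" where
  "unbounded_family F \<longleftrightarrow>
     \<not> (\<exists>g::nat \<Rightarrow> nat. \<forall>f\<in>F. \<forall>\<^sub>F n in sequentially. f n \<le> g n)"

text \<open>b < kappa(G), where b is the least size of an unbounded family and kappa(G) the
  least size of a subset of X not covered by countably many compact anticliques
  (infinity if X is covered): there is an unbounded family F such that every subset
  of X of cardinality at most |F| is so covered.\<close>
definition b_less_kappa :: "('a::topological_space \<Rightarrow> 'a \<Rightarrow> bool) \<Rightarrow> bool" where
  "b_less_kappa G \<longleftrightarrow>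
     (\<exists>F::(nat \<Rightarrow> nat) set. unbounded_family F \<and>
        (\<forall>Y::'a set. (card_of Y, card_of F) \<in> ordLeq \<longrightarrow> cc_covered G Y))"

definition PG :: "('a::topological_space \<Rightarrow> 'a \<Rightarrow> bool) \<Rightarrow> ('a set \<times> 'a set) set" where
  "PG G = {(a, U). finite a \<and> anticlique G a \<and> open U \<and> a \<subseteq> U}"

text \<open>pg_le q p means q is stronger than p: a_p \<subseteq> a_q and o_q \<subseteq> o_p.\<close>
definition pg_le :: "('a set \<times> 'a set) \<Rightarrow> ('a set \<times> 'a set) \<Rightarrow> bool" where
  "pg_le q p \<longleftrightarrow> fst p \<subseteq> fst q \<and> snd q \<subseteq> snd p"

definition compatible :: "'c set \<Rightarrow> ('c \<Rightarrow> 'c \<Rightarrow> bool) \<Rightarrow> 'c \<Rightarrow> 'c \<Rightarrow> bool" where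
  "compatible P le p q \<longleftrightarrow> (\<exists>r\<in>P. le r p \<and> le r q)"

text \<open>A (nice) name for an element of omega^omega: A n k is the set of conditions
  deciding "tau(n) = k"; for each n the conditions deciding different values are
  incompatible, and the conditions deciding some value of tau(n) are dense.
  In a generic extension by a filter G, tau_G(n) = k iff G meets A n k.\<close>
definition real_name :: "'c set \<Rightarrow> ('c \<Rightarrow> 'c \<Rightarrow> bool) \<Rightarrow> (nat \<Rightarrow> nat \<Rightarrow> 'c set) \<Rightarrow> bool" where
  "real_name P le A \<longleftrightarrow>
     (\<forall>n k. A n k \<subseteq> P) \<and>
     (\<forall>n k k' p q. k \<noteq> k' \<longrightarrow> p \<in> A n k \<longrightarrow> q \<in> A n k' \<longrightarrow> \<not> compatible P le p q) \<and>
     (\<forall>n. \<forall>q\<in>P. \<exists>r\<in>P. le r q \<and> (\<exists>k. r \<in> A n k))"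

definition forces_ge :: "'c set \<Rightarrow> ('c \<Rightarrow> 'c \<Rightarrow> bool) \<Rightarrow> (nat \<Rightarrow> nat \<Rightarrow> 'c set)
    \<Rightarrow> 'c \<Rightarrow> nat \<Rightarrow> nat \<Rightarrow> bool" where
  "forces_ge P le A p n m \<longleftrightarrow>
     (\<forall>q\<in>P. le q p \<longrightarrow> (\<exists>r\<in>P. le r q \<and> (\<exists>k\<ge>m. r \<in> A n k)))"

definition forces_dominates :: "'c set \<Rightarrow> ('c \<Rightarrow> 'c \<Rightarrow> bool) \<Rightarrow> (nat \<Rightarrow> nat \<Rightarrow> 'c set)
    \<Rightarrow> 'c \<Rightarrow> (nat \<Rightarrow> nat) \<Rightarrow> bool" where
  "forces_dominates P le A p f \<longleftrightarrow>
     (\<forall>q\<in>P. le q p \<longrightarrow>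
        (\<exists>r\<in>P. le r q \<and> (\<exists>m. \<forall>n\<ge>m. forces_ge P le A r n (f n))))"

definition adds_dominating_real :: "'c set \<Rightarrow> ('c \<Rightarrow> 'c \<Rightarrow> bool) \<Rightarrow> bool" where
  "adds_dominating_real P le \<longleftrightarrow>
     (\<exists>A p. real_name P le A \<and> p \<in> P \<and> (\<forall>f::nat \<Rightarrow> nat. forces_dominates P le A p f))"

end

theory Submission
  imports Defs
begin

lemma pg_le_refl: "pg_le p p" by (simp add: pg_le_def)
lemma pg_le_trans: "pg_le a b \<Longrightarrow> pg_le b c \<Longrightarrow> pg_le a c"
  by (auto simp: pg_le_def)

lemma forces_ge_compat:
  assumes rn: "real_name P pg_le A" and fg: "forces_ge P pg_le A r n M"
    and r': "r' \<in> A n k" and s: "s \<in> P" "pg_le s r'" "pg_le s r"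
  shows "M \<le> k"
proof -
  from fg s obtain r'' k'' where r'': "r'' \<in> P" "pg_le r'' s" "k'' \<ge> M" "r'' \<in> A n k''"
    unfolding forces_ge_def by blast
  have "k = k''"
  proof (rule ccontr)
    assume "k \<noteq> k''"
    with rn r' r''(4) have "\<not> compatible P pg_le r' r''" unfolding real_name_def by blast
    moreover have "compatible P pg_le r' r''"
      unfolding compatible_def using r'' s pg_le_trans pg_le_refl by blast
    ultimately show False by blast
  qed
  with r'' show ?thesis by simp
qed

lemma multi_subseq:
  fixes u :: "nat \<Rightarrow> nat \<Rightarrow> 'a::metric_space"
  assumes "compact (UNIV :: 'a set)"
  shows "\<exists>\<sigma> y. strict_mono \<sigma> \<and> (\<forall>t<l. (\<lambda>i. u (\<sigma> i) t) \<longlonglongrightarrow> y t)"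
proof (induction l)
  case 0
  show ?case by (rule exI[of _ id]) (auto simp: strict_mono_def)
next
  case (Suc l)
  then obtain \<sigma> y where s: "strict_mono \<sigma>" "\<forall>t<l. (\<lambda>i. u (\<sigma> i) t) \<longlonglongrightarrow> y t" by blast
  have "seq_compact (UNIV :: 'a set)" using assms compact_imp_seq_compact by blast
  then obtain z \<rho> where z: "strict_mono \<rho>" "((\<lambda>i. u (\<sigma> i) l) \<circ> \<rho>) \<longlonglongrightarrow> z"
    by (rule seq_compactE) auto
  have "strict_mono (\<sigma> \<circ> \<rho>)" using s z strict_mono_o by blast
  moreover have "\<forall>t<Suc l. (\<lambda>i. u ((\<sigma> \<circ> \<rho>) i) t) \<longlonglongrightarrow> (y(l := z)) t"
  proof (intro allI impI)
    fix t assume t: "t < Suc l"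
    show "(\<lambda>i. u ((\<sigma> \<circ> \<rho>) i) t) \<longlonglongrightarrow> (y(l := z)) t"
    proof (cases "t = l")
      case True then show ?thesis using z by (simp add: o_def)
    next
      case False
      then have "t < l" using t by simp
      then have "(\<lambda>i. u (\<sigma> i) t) \<longlonglongrightarrow> y t" using s by blast
      from LIMSEQ_subseq_LIMSEQ[OF this z(1)] False show ?thesis by (simp add: o_def)
    qed
  qed
  ultimately show ?case by blast
qed

lemma ev_inv_small: "0 < (\<epsilon>::real) \<Longrightarrow> eventually (\<lambda>e. 1 / real (Suc e) < \<epsilon>) sequentially"
proof -
  assume "0 < \<epsilon>"
  then obtain n where n: "n > 0" "inverse (real n) < \<epsilon>" using ex_inverse_of_nat_less by blast
  define N where "N = n - 1"
  have N: "inverse (real (Suc N)) < \<epsilon>" using n unfolding N_def by simp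
  show ?thesis unfolding eventually_sequentially
  proof (intro exI allI impI)
    fix e assume "N \<le> e"
    then have "1 / real (Suc e) \<le> 1 / real (Suc N)" by (simp add: frac_le)
    with N show "1 / real (Suc e) < \<epsilon>" by (simp add: inverse_eq_divide)
  qed
qed


lemma bound_lemma:
  fixes G :: "'a::metric_space \<Rightarrow> 'a \<Rightarrow> bool" and xs :: "'f \<Rightarrow> 'a list"
    and V :: "'f \<Rightarrow> 'a set" and g :: "'f \<Rightarrow> nat" and K :: "nat \<Rightarrow> 'a set"
  assumes cpt: "compact (UNIV::'a set)"
    and symG: "\<forall>x y. G x y \<longrightarrow> G y x"
    and irrG: "\<forall>x. \<not> G x x"
    and Oopen: "open {(a,b). a \<noteq> b \<and> \<not> G a b}"
    and Kc: "\<forall>i. closed (K i) \<and> anticlique G (K i)"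
    and rn: "real_name (PG G) pg_le A"
    and inP: "\<forall>f\<in>S. (set (xs f), V f) \<in> PG G"
    and len: "\<forall>f\<in>S. length (xs f) = length idx"
    and inK: "\<forall>f\<in>S. \<forall>t<length idx. xs f ! t \<in> K (idx ! t)"
    and E1: "\<forall>f\<in>S. \<forall>t<length idx. ball (xs f ! t) (1 / real (Suc e)) \<subseteq> V f"
    and E2: "\<forall>f\<in>S. \<forall>s<length idx. \<forall>t<length idx. s \<noteq> t \<longrightarrow>
       (\<forall>a b. dist a (xs f ! s) < 1 / real (Suc e) \<longrightarrow> dist b (xs f ! t) < 1 / real (Suc e) \<longrightarrow> a \<noteq> b \<and> \<not> G a b)"
    and fg: "\<forall>f\<in>S. forces_ge (PG G) pg_le A (set (xs f), V f) n (g f)"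
  shows "\<exists>M. \<forall>f\<in>S. g f \<le> M"
proof (rule ccontr)
  assume "\<not> ?thesis"
  then have "\<forall>i. \<exists>f\<in>S. g f > i" by (meson not_le)
  then obtain \<phi> where \<phi>: "\<forall>i. \<phi> i \<in> S \<and> g (\<phi> i) > i" by metis
  define l where "l = length idx"
  define Oset where "Oset = {(a,b). a \<noteq> b \<and> \<not> G a b}"
  define u where "u i t = xs (\<phi> i) ! t" for i t
  obtain \<sigma> y where sy: "strict_mono \<sigma>" "\<forall>t<l. (\<lambda>i. u (\<sigma> i) t) \<longlonglongrightarrow> y t"
    using multi_subseq[OF cpt] by blast
  define \<rho> where "\<rho> = 1 / (2 * real (Suc e))"
  have \<rho>pos: "\<rho> > 0" unfolding \<rho>_def by simp
  have \<rho>2: "2 * \<rho> = 1 / real (Suc e)" unfolding \<rho>_def by (simp add: field_simps)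
  have ev1: "eventually (\<lambda>i. \<forall>t\<in>{..<l}. dist (u (\<sigma> i) t) (y t) < \<rho>) sequentially"
    by (rule eventually_ball_finite) (use sy \<rho>pos in \<open>auto simp: tendsto_iff\<close>)
  then obtain i0 where i0: "\<forall>t<l. dist (u (\<sigma> i0) t) (y t) < \<rho>"
    unfolding eventually_sequentially by auto
  define ys where "ys = y ` {..<l}"
  have uK: "u i t \<in> K (idx ! t)" if "t < l" for i t
    using \<phi> inK that unfolding u_def l_def by blast
  have yK: "y t \<in> K (idx ! t)" if "t < l" for t
    using closed_sequentially[of "K (idx ! t)" "\<lambda>i. u (\<sigma> i) t" "y t"] Kc uK sy that by blast
  have E2': "\<forall>s<l. \<forall>t<l. s \<noteq> t \<longrightarrow> (\<forall>a b. dist a (u i s) < 1 / real (Suc e) \<longrightarrow>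
       dist b (u i t) < 1 / real (Suc e) \<longrightarrow> a \<noteq> b \<and> \<not> G a b)" for i
    using E2 \<phi> unfolding u_def l_def by blast
  have ys_anti: "anticlique G ys"
    unfolding anticlique_def ys_def
  proof (clarify)
    fix s t assume st: "s < l" "t < l" "y s \<noteq> y t" "G (y s) (y t)"
    then have "s \<noteq> t" by auto
    moreover have "dist (y s) (u (\<sigma> i0) s) < 1 / real (Suc e)"
      using i0 st \<rho>pos \<rho>2 by (auto simp: dist_commute)
    moreover have "dist (y t) (u (\<sigma> i0) t) < 1 / real (Suc e)"
      using i0 st \<rho>pos \<rho>2 by (auto simp: dist_commute)
    ultimately show False using E2'[of "\<sigma> i0"] st by blast
  qed
  define W where "W = (\<Union>t<l. ball (y t) \<rho>)"
  have q: "(ys, W) \<in> PG G"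
    unfolding PG_def W_def ys_def using ys_anti \<rho>pos by (auto simp: ys_def)
  from rn q obtain r k where r: "r \<in> PG G" "pg_le r (ys, W)" "r \<in> A n k"
    unfolding real_name_def by blast
  obtain c Z where cZ: "r = (c, Z)" by (cases r)
  have c: "finite c" "anticlique G c" "open Z" "c \<subseteq> Z" "ys \<subseteq> c" "Z \<subseteq> W"
    using r cZ unfolding PG_def pg_le_def by auto
  have ev2: "eventually (\<lambda>i. \<forall>t\<in>{..<l}. u (\<sigma> i) t \<in> Z) sequentially"
  proof (rule eventually_ball_finite)
    show "\<forall>t\<in>{..<l}. eventually (\<lambda>i. u (\<sigma> i) t \<in> Z) sequentially"
    proof
      fix t assume t: "t \<in> {..<l}"
      then have "y t \<in> Z" using c unfolding ys_def by auto
      then show "eventually (\<lambda>i. u (\<sigma> i) t \<in> Z) sequentially"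
        using topological_tendstoD[of "\<lambda>i. u (\<sigma> i) t" "y t" sequentially Z] sy t c by auto
    qed
  qed simp
  have ev3: "eventually (\<lambda>i. \<forall>z\<in>c. \<forall>t\<in>{..<l}. z \<noteq> y t \<longrightarrow> (z, u (\<sigma> i) t) \<in> Oset) sequentially"
  proof (rule eventually_ball_finite[OF c(1)], rule ballI, rule eventually_ball_finite, simp, rule ballI)
    fix z t assume z: "z \<in> c" and t: "t \<in> {..<l}"
    show "eventually (\<lambda>i. z \<noteq> y t \<longrightarrow> (z, u (\<sigma> i) t) \<in> Oset) sequentially"
    proof (cases "z = y t")
      case True then show ?thesis by simp
    next
      case False
      have "y t \<in> c" using t c unfolding ys_def by auto
      then have "(z, y t) \<in> Oset" using False z c(2) unfolding Oset_def anticlique_def by auto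
      moreover have "((\<lambda>i. (z, u (\<sigma> i) t)) \<longlonglongrightarrow> (z, y t))"
        using sy t by (intro tendsto_Pair tendsto_const) auto
      ultimately have "eventually (\<lambda>i. (z, u (\<sigma> i) t) \<in> Oset) sequentially"
        using topological_tendstoD Oopen unfolding Oset_def by blast
      then show ?thesis by (rule eventually_mono) simp
    qed
  qed
  have ev4: "eventually (\<lambda>i. \<sigma> i > k) sequentially"
  proof -
    have "eventually (\<lambda>i. i > k) sequentially" by (rule eventually_gt_at_top)
    then show ?thesis by (rule eventually_mono) (use seq_suble[OF sy(1)] in \<open>metis less_le_trans\<close>)
  qed
  from eventually_conj[OF ev1 eventually_conj[OF ev2 eventually_conj[OF ev3 ev4]]]
  obtain N where N: "\<forall>n\<ge>N. (\<forall>t\<in>{..<l}. dist (u (\<sigma> n) t) (y t) < \<rho>) \<and>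
             (\<forall>t\<in>{..<l}. u (\<sigma> n) t \<in> Z) \<and>
             (\<forall>z\<in>c. \<forall>t\<in>{..<l}. z \<noteq> y t \<longrightarrow> (z, u (\<sigma> n) t) \<in> Oset) \<and> k < \<sigma> n"
    unfolding eventually_sequentially by blast
  obtain i where i: "\<forall>t<l. dist (u (\<sigma> i) t) (y t) < \<rho>" "\<forall>t<l. u (\<sigma> i) t \<in> Z"
     "\<forall>z\<in>c. \<forall>t<l. z \<noteq> y t \<longrightarrow> (z, u (\<sigma> i) t) \<in> Oset" "\<sigma> i > k"
    using N[rule_format, OF order_refl] by (intro that[of N]) auto
  define f where "f = \<phi> (\<sigma> i)"
  have fS: "f \<in> S" and gf: "g f > \<sigma> i" using \<phi> unfolding f_def by auto
  define b where "b = set (xs f)"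
  have b_eq: "b = {u (\<sigma> i) t | t. t < l}"
    unfolding b_def u_def f_def l_def using len fS f_def by (auto simp: in_set_conv_nth)
  have bP: "finite b" "anticlique G b" "open (V f)" "b \<subseteq> V f"
    using inP fS unfolding PG_def b_def by auto
  have bZ: "b \<subseteq> Z" using i b_eq by auto
  have cV: "c \<subseteq> V f"
  proof
    fix z assume "z \<in> c"
    then have "z \<in> W" using c by auto
    then obtain t where t: "t < l" "dist (y t) z < \<rho>" unfolding W_def by auto
    have "dist (u (\<sigma> i) t) z \<le> dist (u (\<sigma> i) t) (y t) + dist (y t) z" by (rule dist_triangle)
    also have "\<dots> < 2 * \<rho>" using i t by auto
    finally have "z \<in> ball (xs f ! t) (1 / real (Suc e))"
      using \<rho>2 unfolding u_def f_def by simp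
    then show "z \<in> V f" using E1 fS t unfolding l_def by blast
  qed
  have cross: "\<not> G z w" if zw: "z \<in> c" "w \<in> b" for z w
  proof -
    obtain t where t: "t < l" "w = u (\<sigma> i) t" using zw(2) b_eq by auto
    show ?thesis
    proof (cases "z = y t")
      case True
      have "z \<in> K (idx ! t)" "w \<in> K (idx ! t)" using True yK uK t by auto
      then show ?thesis using Kc irrG unfolding anticlique_def by metis
    next
      case False
      then show ?thesis using i(3) zw t unfolding Oset_def by auto
    qed
  qed
  have s: "(c \<union> b, Z \<inter> V f) \<in> PG G"
    unfolding PG_def
  proof (clarsimp, intro conjI)
    show "finite c" "finite b" using c bP by auto
    show "anticlique G (c \<union> b)"
      unfolding anticlique_def using c(2) bP(2) cross symG unfolding anticlique_def by blast
    show "open (Z \<inter> V f)" using c bP by auto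
    show "c \<subseteq> Z" "c \<subseteq> V f" "b \<subseteq> Z" "b \<subseteq> V f" using c cV bZ bP by auto
  qed
  have "g f \<le> k"
  proof (rule forces_ge_compat[OF rn _ r(3) s])
    show "forces_ge (PG G) pg_le A (set (xs f), V f) n (g f)" using fg fS by blast
    show "pg_le (c \<union> b, Z \<inter> V f) r" using cZ unfolding pg_le_def by auto
    show "pg_le (c \<union> b, Z \<inter> V f) (set (xs f), V f)" unfolding pg_le_def b_def by auto
  qed
  with gf i show False by simp
qed


lemma exists_e:
  fixes G :: "'a::metric_space \<Rightarrow> 'a \<Rightarrow> bool"
  assumes Oopen: "open {(a,b). a \<noteq> b \<and> \<not> G a b}"
    and anti: "anticlique G (set xs)" and dist: "distinct xs" and oV: "open V" and sub: "set xs \<subseteq> V"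
  shows "\<exists>e. (\<forall>t<length xs. ball (xs ! t) (1 / real (Suc e)) \<subseteq> V) \<and>
    (\<forall>s<length xs. \<forall>t<length xs. s \<noteq> t \<longrightarrow>
       (\<forall>a b. dist a (xs ! s) < 1 / real (Suc e) \<longrightarrow> dist b (xs ! t) < 1 / real (Suc e) \<longrightarrow> a \<noteq> b \<and> \<not> G a b))"
proof -
  define l where "l = length xs"
  have ev1: "eventually (\<lambda>e. \<forall>t\<in>{..<l}. ball (xs ! t) (1 / real (Suc e)) \<subseteq> V) sequentially"
  proof (rule eventually_ball_finite, simp, rule ballI)
    fix t assume "t \<in> {..<l}"
    then have "xs ! t \<in> V" using sub unfolding l_def by auto
    then obtain \<epsilon> where \<epsilon>: "\<epsilon> > 0" "ball (xs ! t) \<epsilon> \<subseteq> V" using oV open_contains_ball by blast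
    show "eventually (\<lambda>e. ball (xs ! t) (1 / real (Suc e)) \<subseteq> V) sequentially"
      using ev_inv_small[OF \<epsilon>(1)] by (rule eventually_mono) (use \<epsilon> in auto)
  qed
  have ev2: "eventually (\<lambda>e. \<forall>s\<in>{..<l}. \<forall>t\<in>{..<l}. s \<noteq> t \<longrightarrow>
       (\<forall>a b. dist a (xs ! s) < 1 / real (Suc e) \<longrightarrow> dist b (xs ! t) < 1 / real (Suc e) \<longrightarrow> a \<noteq> b \<and> \<not> G a b)) sequentially"
  proof (rule eventually_ball_finite, simp, rule ballI, rule eventually_ball_finite, simp, rule ballI)
    fix s t assume st: "s \<in> {..<l}" "t \<in> {..<l}"
    show "eventually (\<lambda>e. s \<noteq> t \<longrightarrow>
       (\<forall>a b. dist a (xs ! s) < 1 / real (Suc e) \<longrightarrow> dist b (xs ! t) < 1 / real (Suc e) \<longrightarrow> a \<noteq> b \<and> \<not> G a b)) sequentially"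
    proof (cases "s = t")
      case True then show ?thesis by simp
    next
      case False
      then have ne: "xs ! s \<noteq> xs ! t" using dist st unfolding l_def by (simp add: nth_eq_iff_index_eq)
      have "xs ! s \<in> set xs" "xs ! t \<in> set xs" using st unfolding l_def by auto
      then have "\<not> G (xs ! s) (xs ! t)" using anti ne unfolding anticlique_def by blast
      with ne have "(xs ! s, xs ! t) \<in> {(a,b). a \<noteq> b \<and> \<not> G a b}" by simp
      then obtain A B where AB: "open A" "open B" "(xs ! s, xs ! t) \<in> A \<times> B"
        "A \<times> B \<subseteq> {(a,b). a \<noteq> b \<and> \<not> G a b}"
        using open_prod_elim[OF Oopen] by blast
      obtain \<epsilon>1 where e1: "\<epsilon>1 > 0" "ball (xs ! s) \<epsilon>1 \<subseteq> A" using AB open_contains_ball by blast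
      obtain \<epsilon>2 where e2: "\<epsilon>2 > 0" "ball (xs ! t) \<epsilon>2 \<subseteq> B" using AB open_contains_ball by blast
      have "min \<epsilon>1 \<epsilon>2 > 0" using e1 e2 by simp
      from ev_inv_small[OF this] show ?thesis
      proof (rule eventually_mono, intro impI allI)
        fix e a b assume e: "1 / real (Suc e) < min \<epsilon>1 \<epsilon>2"
          and a: "dist a (xs ! s) < 1 / real (Suc e)" and b: "dist b (xs ! t) < 1 / real (Suc e)"
        have "a \<in> A" using e a e1 by (auto simp: dist_commute)
        moreover have "b \<in> B" using e b e2 by (auto simp: dist_commute)
        ultimately show "a \<noteq> b \<and> \<not> G a b" using AB(4) by blast
      qed
    qed
  qed
  from eventually_conj[OF ev1 ev2] obtain N where
    "\<forall>n\<ge>N. (\<forall>t\<in>{..<l}. ball (xs ! t) (1 / real (Suc n)) \<subseteq> V) \<and> (\<forall>s\<in>{..<l}. \<forall>t\<in>{..<l}. s \<noteq> t \<longrightarrow>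
       (\<forall>a b. dist a (xs ! s) < 1 / real (Suc n) \<longrightarrow> dist b (xs ! t) < 1 / real (Suc n) \<longrightarrow> a \<noteq> b \<and> \<not> G a b))"
    unfolding eventually_sequentially by blast
  then have "(\<forall>t\<in>{..<l}. ball (xs ! t) (1 / real (Suc N)) \<subseteq> V) \<and> (\<forall>s\<in>{..<l}. \<forall>t\<in>{..<l}. s \<noteq> t \<longrightarrow>
       (\<forall>a b. dist a (xs ! s) < 1 / real (Suc N) \<longrightarrow> dist b (xs ! t) < 1 / real (Suc N) \<longrightarrow> a \<noteq> b \<and> \<not> G a b))"
    by blast
  then show ?thesis unfolding l_def lessThan_iff Ball_def by blast
qed


theorem theorem2p3:
  fixes G :: "'a::metric_space \<Rightarrow> 'a \<Rightarrow> bool"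
  assumes "compact (UNIV :: 'a set)"
    and "closed_graph G"
    and "b_less_kappa G"
  shows "\<not> adds_dominating_real (PG G) pg_le"
proof
  assume "adds_dominating_real (PG G) pg_le"
  then obtain A p where rn: "real_name (PG G) pg_le A" and pP: "p \<in> PG G"
    and dom: "\<forall>f::nat\<Rightarrow>nat. forces_dominates (PG G) pg_le A p f"
    unfolding adds_dominating_real_def by blast
  from assms(3) obtain F where unb: "unbounded_family F"
    and cov: "\<forall>Y::'a set. (card_of Y, card_of F) \<in> ordLeq \<longrightarrow> cc_covered G Y"
    unfolding b_less_kappa_def by blast
  have symG: "\<forall>x y. G x y \<longrightarrow> G y x" and irrG: "\<forall>x. \<not> G x x"
    and clG: "closedin (top_of_set {p::'a \<times> 'a. fst p \<noteq> snd p}) {(x, y). G x y}"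
    using assms(2) unfolding closed_graph_def by auto
  have Oopen: "open {(a,b). a \<noteq> b \<and> \<not> G a b}"
  proof -
    obtain T where T: "closed T" "{(x, y). G x y} = {p::'a \<times> 'a. fst p \<noteq> snd p} \<inter> T"
      using clG closedin_closed by blast
    have D: "open {p::'a \<times> 'a. fst p \<noteq> snd p}"
      by (intro open_Collect_neq continuous_intros)
    have "{(a,b). a \<noteq> b \<and> \<not> G a b} = {p::'a \<times> 'a. fst p \<noteq> snd p} - T"
    proof (rule set_eqI)
      fix z :: "'a \<times> 'a"
      obtain a b where z: "z = (a, b)" by (cases z)
      have "G a b \<longleftrightarrow> (a, b) \<in> {(x, y). G x y}" by simp
      then show "z \<in> {(a,b). a \<noteq> b \<and> \<not> G a b} \<longleftrightarrow> z \<in> {p::'a \<times> 'a. fst p \<noteq> snd p} - T"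
        using T(2) z by auto
    qed
    with D T(1) show ?thesis by (simp add: open_Diff)
  qed
  have "\<forall>f::nat\<Rightarrow>nat. \<exists>r m. r \<in> PG G \<and> (\<forall>n\<ge>m. forces_ge (PG G) pg_le A r n (f n))"
  proof
    fix f :: "nat \<Rightarrow> nat"
    from dom pP pg_le_refl[of p] obtain r m where "r \<in> PG G" "\<forall>n\<ge>m. forces_ge (PG G) pg_le A r n (f n)"
      unfolding forces_dominates_def by blast
    then show "\<exists>r m. r \<in> PG G \<and> (\<forall>n\<ge>m. forces_ge (PG G) pg_le A r n (f n))" by blast
  qed
  then obtain R M where RM: "\<And>f. R f \<in> PG G" "\<And>f n. n \<ge> M f \<Longrightarrow> forces_ge (PG G) pg_le A (R f) n (f n)"
    by metis
  have infF: "infinite F"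
  proof
    assume fin: "finite F"
    have "\<forall>f\<in>F. \<forall>\<^sub>F n in sequentially. f n \<le> (\<Sum>g\<in>F. g n)"
      using fin by (auto intro!: always_eventually member_le_sum[where f="\<lambda>g. g _"])
    then have "\<exists>g::nat\<Rightarrow>nat. \<forall>f\<in>F. \<forall>\<^sub>F n in sequentially. f n \<le> g n"
      by (rule exI[where x="\<lambda>n. \<Sum>g\<in>F. g n"])
    with unb show False unfolding unbounded_family_def by blast
  qed
  define Y where "Y = (\<Union>f\<in>F. fst (R f))"
  have finR: "finite (fst (R f))" for f using RM(1)[of f] unfolding PG_def by auto
  have "(card_of Y, card_of F) \<in> ordLeq"
    unfolding Y_def
    by (rule card_of_UNION_ordLeq_infinite[OF infF card_of_mono1[OF subset_refl]])
       (use finR ordLeq3_finite_infinite infF in blast)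
  then have "cc_covered G Y" using cov by simp
  then obtain C where C: "countable C" "\<forall>K\<in>C. compact K \<and> anticlique G K" "Y \<subseteq> \<Union>C"
    unfolding cc_covered_def by (elim exE conjE)
  define C' where "C' = insert {} C"
  define K where "K = from_nat_into C'"
  have rK: "range K = C'" unfolding K_def C'_def using C(1) by simp
  have Kc: "\<forall>i. closed (K i) \<and> anticlique G (K i)"
  proof
    fix i
    have "K i \<in> C'" using rK by blast
    then show "closed (K i) \<and> anticlique G (K i)"
      using C(2) compact_imp_closed unfolding C'_def anticlique_def by auto
  qed
  have YK: "\<exists>i. x \<in> K i" if xY: "x \<in> Y" for x
  proof -
    obtain K0 where "K0 \<in> C" "x \<in> K0" using xY C(3) by blast
    then have "K0 \<in> range K" using rK unfolding C'_def by blast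
    then obtain i where "K0 = K i" by blast
    with \<open>x \<in> K0\<close> show ?thesis by blast
  qed
  have "\<forall>f. \<exists>xs. set xs = fst (R f) \<and> distinct xs" using finR finite_distinct_list by blast
  from choice[OF this] obtain XS where XS0: "\<forall>f. set (XS f) = fst (R f) \<and> distinct (XS f)" ..
  have XS: "\<And>f. set (XS f) = fst (R f)" "\<And>f. distinct (XS f)" using XS0 by auto
  define V where "V f = snd (R f)" for f
  have Req: "R f = (set (XS f), V f)" for f using XS(1)[of f] unfolding V_def by (cases "R f") auto
  have RP: "finite (set (XS f)) \<and> anticlique G (set (XS f)) \<and> open (V f) \<and> set (XS f) \<subseteq> V f" for f
    using RM(1)[of f] Req[of f] unfolding PG_def by auto
  define idx where "idx f = map (\<lambda>t. SOME i. XS f ! t \<in> K i) [0..<length (XS f)]" for f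
  have idx_len: "length (idx f) = length (XS f)" for f unfolding idx_def by simp
  have idx_K: "XS f ! t \<in> K (idx f ! t)" if "f \<in> F" "t < length (XS f)" for f t
  proof -
    have "XS f ! t \<in> set (XS f)" using that(2) by (rule nth_mem)
    then have "XS f ! t \<in> fst (R f)" using XS(1)[of f] by simp
    then have "XS f ! t \<in> Y" unfolding Y_def using that(1) by blast
    then have ex: "\<exists>i. XS f ! t \<in> K i" by (rule YK)
    have "(SOME i. XS f ! t \<in> K i) = idx f ! t" unfolding idx_def using that(2) by simp
    moreover have "XS f ! t \<in> K (SOME i. XS f ! t \<in> K i)" using ex by (rule someI_ex)
    ultimately show ?thesis by simp
  qed
  have "\<forall>f. \<exists>e. (\<forall>t<length (XS f). ball (XS f ! t) (1 / real (Suc e)) \<subseteq> V f) \<and>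
    (\<forall>s<length (XS f). \<forall>t<length (XS f). s \<noteq> t \<longrightarrow>
       (\<forall>a b. dist a (XS f ! s) < 1 / real (Suc e) \<longrightarrow> dist b (XS f ! t) < 1 / real (Suc e) \<longrightarrow> a \<noteq> b \<and> \<not> G a b))"
  proof
    fix f show "\<exists>e. (\<forall>t<length (XS f). ball (XS f ! t) (1 / real (Suc e)) \<subseteq> V f) \<and>
    (\<forall>s<length (XS f). \<forall>t<length (XS f). s \<noteq> t \<longrightarrow>
       (\<forall>a b. dist a (XS f ! s) < 1 / real (Suc e) \<longrightarrow> dist b (XS f ! t) < 1 / real (Suc e) \<longrightarrow> a \<noteq> b \<and> \<not> G a b))"
      by (rule exists_e[OF Oopen]) (use RP[of f] XS(2)[of f] in auto)
  qed
  from choice[OF this] obtain Ee where Ee: "\<forall>f. (\<forall>t<length (XS f). ball (XS f ! t) (1 / real (Suc (Ee f))) \<subseteq> V f) \<and>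
    (\<forall>s<length (XS f). \<forall>t<length (XS f). s \<noteq> t \<longrightarrow>
       (\<forall>a b. dist a (XS f ! s) < 1 / real (Suc (Ee f)) \<longrightarrow> dist b (XS f ! t) < 1 / real (Suc (Ee f)) \<longrightarrow> a \<noteq> b \<and> \<not> G a b))" ..
  define code where "code f = (M f, idx f, Ee f)" for f
  have bnd: "\<exists>B. \<forall>f\<in>F. code f = c \<longrightarrow> f n \<le> B" if "n \<ge> fst c" for c n
  proof -
    obtain m0 id0 e0 where c: "c = (m0, id0, e0)" by (cases c)
    define S where "S = {f\<in>F. code f = c}"
    have Sc: "f \<in> F" "M f = m0" "idx f = id0" "Ee f = e0" if "f \<in> S" for f
      using that unfolding S_def code_def c by auto
    have "\<exists>B. \<forall>f\<in>S. f n \<le> B"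
    proof (rule bound_lemma[OF assms(1) symG irrG Oopen Kc rn, where xs=XS and V=V and idx=id0 and e=e0])
      show "\<forall>f\<in>S. (set (XS f), V f) \<in> PG G" using RM(1) Req by simp
      show "\<forall>f\<in>S. length (XS f) = length id0"
      proof
        fix f assume "f \<in> S" then show "length (XS f) = length id0" using Sc(3) idx_len by metis
      qed
      show "\<forall>f\<in>S. \<forall>t<length id0. XS f ! t \<in> K (id0 ! t)"
      proof (intro ballI allI impI)
        fix f t assume "f \<in> S" "t < length id0"
        then show "XS f ! t \<in> K (id0 ! t)" using Sc(1,3)[of f] idx_len[of f] idx_K[of f t] by simp
      qed
      show "\<forall>f\<in>S. \<forall>t<length id0. ball (XS f ! t) (1 / real (Suc e0)) \<subseteq> V f"
      proof (intro ballI allI impI)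
        fix f t assume "f \<in> S" "t < length id0"
        then show "ball (XS f ! t) (1 / real (Suc e0)) \<subseteq> V f"
          using Sc(3,4)[of f] idx_len[of f] spec[OF Ee, of f] by simp
      qed
      show "\<forall>f\<in>S. \<forall>s<length id0. \<forall>t<length id0. s \<noteq> t \<longrightarrow>
       (\<forall>a b. dist a (XS f ! s) < 1 / real (Suc e0) \<longrightarrow> dist b (XS f ! t) < 1 / real (Suc e0) \<longrightarrow> a \<noteq> b \<and> \<not> G a b)"
      proof (intro ballI allI impI)
        fix f s t a b assume "f \<in> S" "s < length id0" "t < length id0" "s \<noteq> t"
          "dist a (XS f ! s) < 1 / real (Suc e0)" "dist b (XS f ! t) < 1 / real (Suc e0)"
        then show "a \<noteq> b \<and> \<not> G a b"
          using Sc(3,4)[of f] idx_len[of f] spec[OF Ee, of f] by simp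
      qed
      show "\<forall>f\<in>S. forces_ge (PG G) pg_le A (set (XS f), V f) n (f n)"
      proof
        fix f assume "f \<in> S"
        then have "n \<ge> M f" using Sc(2)[of f] that c by simp
        then show "forces_ge (PG G) pg_le A (set (XS f), V f) n (f n)" using RM(2)[of f n] Req[of f] by simp
      qed
    qed
    then show ?thesis unfolding S_def by blast
  qed
  define Bd where "Bd c n = (SOME B. \<forall>f\<in>F. code f = c \<longrightarrow> f n \<le> B)" for c :: "nat \<times> nat list \<times> nat" and n
  define h where "h n = (\<Sum>i\<le>n. Bd (from_nat i) n)" for n
  have "\<forall>f\<in>F. \<forall>\<^sub>F n in sequentially. f n \<le> h n"
  proof
    fix f assume fF: "f \<in> F"
    show "\<forall>\<^sub>F n in sequentially. f n \<le> h n"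
      unfolding eventually_sequentially
    proof (intro exI allI impI)
      fix n assume n: "max (M f) (to_nat (code f)) \<le> n"
      have "fst (code f) \<le> n" using n unfolding code_def by simp
      from bnd[OF this] have "\<exists>B. \<forall>g\<in>F. code g = code f \<longrightarrow> g n \<le> B" .
      then have "\<forall>g\<in>F. code g = code f \<longrightarrow> g n \<le> Bd (code f) n" unfolding Bd_def by (rule someI_ex)
      then have "f n \<le> Bd (code f) n" using fF by blast
      also have "\<dots> = Bd (from_nat (to_nat (code f))) n" by (simp only: from_nat_to_nat)
      also have "\<dots> \<le> h n"
      proof -
        have "to_nat (code f) \<in> {..n}" using n by simp
        from member_le_sum[of "to_nat (code f)" "{..n}" "\<lambda>i. Bd (from_nat i) n", OF this]
        show ?thesis unfolding h_def by simp
      qed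
      finally show "f n \<le> h n" .
    qed
  qed
  then have exh: "\<exists>g::nat\<Rightarrow>nat. \<forall>f\<in>F. \<forall>\<^sub>F n in sequentially. f n \<le> g n"
    by (rule exI[where x=h])
  have nunb: "\<not> (\<exists>g::nat\<Rightarrow>nat. \<forall>f\<in>F. \<forall>\<^sub>F n in sequentially. f n \<le> g n)"
    using unb unfolding unbounded_family_def .
  from nunb exh show False by (rule notE)
qed

end
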